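(* Let $\boldsymbol{z}=(z_1,\dots,z_s)$ be a vector of pairwise distinct complex nodes with $|z_j|=1$ for $j=1,\dots,s$, and let $\delta_{j,k}=|\mathrm{Arg}(z_j/z_k)|$. Then \[\sigma_{\min}\big(\mathbf{U}_{2s}(\boldsymbol{z})\big)\ge\frac{\pi^{2(1-s)}}{\sqrt{2s}}\min_{1\le j\le s}\gamma_j\prod_{k\ne j}\delta_{j,k}^2,\qquad\text{where }\ \gamma_j=\min\Big(\frac12,\ \frac{2}{5\pi}\Big(\sum_{k\ne j}\delta_{j,k}^{-1}\Big)^{-1}\Big).\]
   Context: For $\boldsymbol{z}=(z_1,\dots,z_s)$, $\mathbf{U}_{2s}(\boldsymbol{z})$ is the square $2s\times 2s$ confluent Vandermonde matrix $[\,z_j^k\quad kz_j^{k-1}\,]^{j=1,\dots,s}_{k=0,\dots,2s-1}$, i.e. row $k$ has entries $z_1^k,\dots,z_s^k,kz_1^{k-1},\dots,kz_s^{k-1}$. $\mathrm{Arg}$ is the principal argument in $(-\pi,\pi]$; $\sigma_{\min}$ is the smallest singular value. *)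

theory Defs
  imports "HOL-Analysis.Analysis"
begin

text \<open>Nodes are indexed 0..s-1 (z :: nat => complex).\<close>
definition conf_vandermonde :: "nat \<Rightarrow> (nat \<Rightarrow> complex) \<Rightarrow> nat \<Rightarrow> nat \<Rightarrow> complex" where
  "conf_vandermonde s z k j =
     (if j < s then z j ^ k else of_nat k * z (j - s) ^ (k - 1))"

definition vnorm :: "nat \<Rightarrow> (nat \<Rightarrow> complex) \<Rightarrow> real" where
  "vnorm n x = sqrt (\<Sum>i<n. (cmod (x i))\<^sup>2)"

definition mat_vec :: "nat \<Rightarrow> (nat \<Rightarrow> nat \<Rightarrow> complex) \<Rightarrow> (nat \<Rightarrow> complex) \<Rightarrow> nat \<Rightarrow> complex" where
  "mat_vec n A x = (\<lambda>k. \<Sum>j<n. A k j * x j)"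

definition sigma_min :: "nat \<Rightarrow> (nat \<Rightarrow> nat \<Rightarrow> complex) \<Rightarrow> real" where
  "sigma_min n A = Inf {vnorm n (mat_vec n A x) | x. vnorm n x = 1}"

definition delta :: "(nat \<Rightarrow> complex) \<Rightarrow> nat \<Rightarrow> nat \<Rightarrow> real" where
  "delta z j k = \<bar>Arg (z j / z k)\<bar>"

text \<open>gamma_j = min(1/2, 2/(5 pi) * (sum_{k<>j} 1/delta_{jk})^{-1}); for s = 1 the sum is
empty and its inverse is +infinity, so gamma_j = 1/2.\<close>
definition gamma :: "nat \<Rightarrow> (nat \<Rightarrow> complex) \<Rightarrow> nat \<Rightarrow> real" where
  "gamma s z j =
     (let S = (\<Sum>k\<in>{..<s} - {j}. 1 / delta z j k) in
      if S = 0 then 1/2 else min (1/2) (2 / (5 * pi) * (1 / S)))"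

end

theory Submission
  imports Defs "HOL-Computational_Algebra.Polynomial"
begin


lemma jordan_ineq:
  fixes t :: real assumes "0 \<le> t" "t \<le> pi/2"
  shows "2 * t / pi \<le> sin t"
proof -
  have cv: "convex_on {0..pi/2} (\<lambda>x. - sin x)"
  proof (rule f''_ge0_imp_convex[where f'="\<lambda>x. - cos x" and f''="\<lambda>x. sin x"])
    show "convex {0..pi/2}" by simp
    fix x assume "x \<in> {0..pi/2::real}"
    show "((\<lambda>x. - sin x) has_real_derivative - cos x) (at x)"
      by (auto intro!: derivative_eq_intros)
    show "((\<lambda>x. - cos x) has_real_derivative sin x) (at x)"
      by (auto intro!: derivative_eq_intros)
    show "0 \<le> sin x" using \<open>x \<in> _\<close> by (intro sin_ge_zero) auto
  qed
  define u where "u = 2 * t / pi"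
  have u: "0 \<le> u" "u \<le> 1" using assms by (auto simp: u_def field_simps)
  have "- sin ((1 - u) *\<^sub>R 0 + u *\<^sub>R (pi/2)) \<le> (1 - u) * (- sin 0) + u * (- sin (pi/2))"
    using convex_onD[OF cv, of u 0 "pi/2"] u by auto
  moreover have "(1 - u) *\<^sub>R 0 + u *\<^sub>R (pi/2) = t" by (simp add: u_def)
  ultimately show ?thesis by (simp add: u_def)
qed

lemma chord_bound:
  fixes u v :: complex
  assumes "cmod u = 1" "cmod v = 1" "u \<noteq> v"
  shows "2 * \<bar>Arg (u / v)\<bar> / pi \<le> cmod (u - v)" "0 < \<bar>Arg (u / v)\<bar>" "\<bar>Arg (u / v)\<bar> \<le> pi"
proof -
  define w where "w = u / v"
  define th where "th = Arg w"
  have v0: "v \<noteq> 0" using assms by auto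
  have nw: "cmod w = 1" using assms by (simp add: w_def norm_divide)
  have w: "w = exp (\<i> * of_real th)"
  proof -
    have "w \<noteq> 0" using nw by auto
    thus ?thesis using Arg_eq[of w] nw by (simp add: th_def)
  qed
  have thb: "-pi < th" "th \<le> pi" using mpi_less_Arg Arg_le_pi th_def by auto
  have "u - v = v * (w - 1)" using v0 by (simp add: w_def field_simps)
  hence "cmod (u - v) = cmod (w - 1)" using assms by (simp add: norm_mult)
  also have "\<dots> = 2 * \<bar>sin (th / 2)\<bar>" unfolding w by (rule dist_exp_i_1)
  also have "\<bar>sin (th / 2)\<bar> = sin (\<bar>th\<bar> / 2)"
  proof (cases "th \<ge> 0")
    case True thus ?thesis using thb by (simp add: sin_ge_zero)
  next
    case False
    hence "sin (\<bar>th\<bar> / 2) = - sin (th/2)" by simp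
    moreover have "0 \<le> sin (\<bar>th\<bar> / 2)" using thb by (intro sin_ge_zero) auto
    ultimately show ?thesis by linarith
  qed
  finally have eq: "cmod (u - v) = 2 * sin (\<bar>th\<bar> / 2)" .
  have "2 * (\<bar>th\<bar>/2) / pi \<le> sin (\<bar>th\<bar> / 2)" using thb by (intro jordan_ineq) auto
  thus "2 * \<bar>Arg (u / v)\<bar> / pi \<le> cmod (u - v)" using eq by (simp add: th_def w_def)
  show "\<bar>Arg (u / v)\<bar> \<le> pi" using thb by (simp add: th_def w_def)
  show "0 < \<bar>Arg (u / v)\<bar>"
  proof (rule ccontr)
    assume "\<not> 0 < \<bar>Arg (u / v)\<bar>"
    hence "th = 0" by (simp add: th_def w_def)
    hence "w = 1" using w by simp
    thus False using assms v0 by (simp add: w_def)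
  qed
qed



lemma root_unity_pow:
  assumes "N \<ge> 1" and w_def: "w = exp (2 * of_real pi * \<i> / of_nat N)"
  shows "w ^ j = exp (2 * of_real pi * \<i> * of_nat j / of_nat N)"
    and "cmod w = 1" and "w ^ N = 1"
    and "w ^ j = 1 \<longleftrightarrow> N dvd j"
proof -
  show 1: "w ^ j = exp (2 * of_real pi * \<i> * of_nat j / of_nat N)" for j
    unfolding w_def by (simp add: exp_of_nat_mult[symmetric] mult_ac)
  show "cmod w = 1" unfolding w_def
    using norm_exp_i_times[of "2 * pi / N"] by (simp add: mult_ac)
  show "w ^ N = 1" using 1[of N] assms by simp
  show "w ^ j = 1 \<longleftrightarrow> N dvd j" using 1[of j] complex_root_unity_eq_1[OF assms(1)] by simp
qed

lemma orth:
  assumes "N \<ge> 1" "k < N" "l < N"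
  and w_def: "w = exp (2 * of_real pi * \<i> / of_nat N)"
  shows "(\<Sum>m<N. (w^k)^m * cnj ((w^l)^m)) = (if k = l then of_nat N else 0)"
proof -
  note r = root_unity_pow[OF assms(1) w_def]
  have wc: "w * cnj w = 1" using r(2) complex_norm_square[of w] by simp
  define \<zeta> where "\<zeta> = w^k * cnj w ^ l"
  have eq: "(w^k)^m * cnj ((w^l)^m) = \<zeta>^m" for m
    by (simp add: \<zeta>_def power_mult_distrib power_mult[symmetric] mult.commute)
  have zN: "\<zeta>^N = 1"
  proof -
    have "\<zeta>^N = (w^N)^k * cnj (w^N)^l"
      by (simp add: \<zeta>_def power_mult_distrib power_mult[symmetric] mult.commute)
    thus ?thesis using r(3) by simp
  qed
  show ?thesis
  proof (cases "k = l")
    case True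
    hence "\<zeta> = 1" by (simp add: \<zeta>_def power_mult_distrib[symmetric] wc)
    have "(\<Sum>m<N. (w^k)^m * cnj ((w^l)^m)) = (\<Sum>m<N. \<zeta>^m)" by (simp only: eq)
    thus ?thesis using True \<open>\<zeta> = 1\<close> by simp
  next
    case False
    have "\<zeta> \<noteq> 1"
    proof (cases "k > l")
      case True
      have "\<zeta> = w^(k-l) * (w * cnj w)^l"
        using True by (simp add: \<zeta>_def power_mult_distrib power_add[symmetric])
      hence "\<zeta> = w^(k-l)" by (simp add: wc)
      moreover have "\<not> N dvd (k - l)" using True assms by (auto dest: dvd_imp_le)
      ultimately show ?thesis using r(4) by simp
    next
      case F: False
      hence kl: "k < l" using False by simp
      have "\<zeta> = cnj (w^(l-k)) * (w * cnj w)^k"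
        using kl by (simp add: \<zeta>_def power_mult_distrib power_add[symmetric] mult.commute)
      hence "\<zeta> = cnj (w^(l-k))" by (simp add: wc)
      moreover have "\<not> N dvd (l - k)" using kl assms by (auto dest: dvd_imp_le)
      ultimately show ?thesis using r(4)[of "l-k"]
        by (metis complex_cnj_cnj complex_cnj_one)
    qed
    hence "(\<Sum>m<N. \<zeta>^m) = 0" using zN by (simp add: sum_gp_strict)
    moreover have "(\<Sum>m<N. (w^k)^m * cnj ((w^l)^m)) = (\<Sum>m<N. \<zeta>^m)" by (simp only: eq)
    ultimately show ?thesis using False by simp
  qed
qed

lemma parseval:
  fixes a :: "nat \<Rightarrow> complex"
  assumes "N \<ge> 1"
  and w_def: "w = exp (2 * of_real pi * \<i> / of_nat N)"
  shows "(\<Sum>m<N. (cmod (\<Sum>k<N. a k * (w^m)^k))\<^sup>2) = of_nat N * (\<Sum>k<N. (cmod (a k))\<^sup>2)"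
proof -
  have "complex_of_real (\<Sum>m<N. (cmod (\<Sum>k<N. a k * (w^m)^k))\<^sup>2)
      = (\<Sum>m<N. (\<Sum>k<N. a k * (w^k)^m) * cnj (\<Sum>l<N. a l * (w^l)^m))"
    unfolding of_real_sum complex_norm_square
    by (simp add: power_mult[symmetric] mult.commute)
  also have "\<dots> = (\<Sum>m<N. \<Sum>k<N. \<Sum>l<N. a k * cnj (a l) * ((w^k)^m * cnj ((w^l)^m)))"
  proof (rule sum.cong[OF refl])
    fix m
    show "(\<Sum>k<N. a k * (w^k)^m) * cnj (\<Sum>l<N. a l * (w^l)^m)
        = (\<Sum>k<N. \<Sum>l<N. a k * cnj (a l) * ((w^k)^m * cnj ((w^l)^m)))"
      unfolding cnj_sum sum_product by (intro sum.cong refl) (simp add: mult_ac)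
  qed
  also have "\<dots> = (\<Sum>k<N. \<Sum>m<N. \<Sum>l<N. a k * cnj (a l) * ((w^k)^m * cnj ((w^l)^m)))"
    by (rule sum.swap)
  also have "\<dots> = (\<Sum>k<N. \<Sum>l<N. \<Sum>m<N. a k * cnj (a l) * ((w^k)^m * cnj ((w^l)^m)))"
    by (intro sum.cong refl sum.swap)
  also have "\<dots> = (\<Sum>k<N. \<Sum>l<N. a k * cnj (a l) * (\<Sum>m<N. (w^k)^m * cnj ((w^l)^m)))"
    by (simp only: sum_distrib_left)
  also have "\<dots> = (\<Sum>k<N. \<Sum>l<N. a k * cnj (a l) * (if k = l then of_nat N else 0))"
    using orth[OF assms(1) _ _ w_def] by simp
  also have "\<dots> = (\<Sum>k<N. a k * cnj (a k) * of_nat N)"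
    by (simp add: if_distrib sum.delta cong: if_cong)
  also have "\<dots> = complex_of_real (of_nat N * (\<Sum>k<N. (cmod (a k))\<^sup>2))"
    unfolding of_real_mult of_real_sum complex_norm_square sum_distrib_left
    by (simp add: mult_ac)
  finally show ?thesis by (simp only: of_real_eq_iff)
qed

lemma coeff_norm_bound:
  fixes a :: "nat \<Rightarrow> complex"
  assumes "N \<ge> 1" "\<And>x. cmod x = 1 \<Longrightarrow> cmod (\<Sum>k<N. a k * x^k) \<le> B"
  shows "(\<Sum>k<N. (cmod (a k))\<^sup>2) \<le> B\<^sup>2"
proof -
  define w where "w = exp (2 * of_real pi * \<i> / of_nat N)"
  note r = root_unity_pow[OF assms(1) w_def]
  have "(cmod (\<Sum>k<N. a k * (w^m)^k))\<^sup>2 \<le> B\<^sup>2" for m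
  proof -
    have "cmod (w^m) = 1" using r(2) by (simp add: norm_power)
    hence "cmod (\<Sum>k<N. a k * (w^m)^k) \<le> B" by (rule assms(2))
    thus ?thesis by (intro power_mono) auto
  qed
  hence "(\<Sum>m<N. (cmod (\<Sum>k<N. a k * (w^m)^k))\<^sup>2) \<le> of_nat N * B\<^sup>2"
    using sum_bounded_above[of "{..<N}" _ "B\<^sup>2"] by simp
  hence "of_nat N * (\<Sum>k<N. (cmod (a k))\<^sup>2) \<le> of_nat N * B\<^sup>2"
    using parseval[OF assms(1) w_def, of a] by simp
  thus ?thesis using assms(1) by simp
qed



lemma poly_as_sum:
  fixes P :: "complex poly"
  assumes "degree P < n"
  shows "poly P x = (\<Sum>k<n. coeff P k * x^k)"
proof -
  have "poly P x = (\<Sum>k\<le>degree P. coeff P k * x^k)" by (rule poly_altdef)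
  also have "\<dots> = (\<Sum>k<n. coeff P k * x^k)"
    using assms by (intro sum.mono_neutral_left) (auto simp: coeff_eq_0)
  finally show ?thesis .
qed

lemma pderiv_as_sum:
  fixes P :: "complex poly"
  assumes "degree P < n"
  shows "poly (pderiv P) x = (\<Sum>k<n. coeff P k * (of_nat k * x^(k-1)))"
proof -
  have e: "poly P = (\<lambda>x. \<Sum>k<n. coeff P k * x^k)"
    using poly_as_sum[OF assms] by auto
  have "((\<lambda>x. \<Sum>k<n. coeff P k * x^k) has_field_derivative (\<Sum>k<n. coeff P k * (of_nat k * x^(k-1)))) (at x)"
    by (rule derivative_eq_intros refl | simp add: mult_ac)+
  moreover have "((\<lambda>x. \<Sum>k<n. coeff P k * x^k) has_field_derivative poly (pderiv P) x) (at x)"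
    using poly_DERIV[of P x] by (simp add: e)
  ultimately show ?thesis by (rule DERIV_unique[rotated])
qed

definition Lp :: "nat \<Rightarrow> (nat \<Rightarrow> complex) \<Rightarrow> nat \<Rightarrow> complex poly" where
  "Lp s z i = (\<Prod>k\<in>{..<s}-{i}. [:- z k / (z i - z k), 1 / (z i - z k):])"
definition cc :: "nat \<Rightarrow> (nat \<Rightarrow> complex) \<Rightarrow> nat \<Rightarrow> complex" where
  "cc s z i = (\<Sum>k\<in>{..<s}-{i}. 2 / (z i - z k))"
definition Pp :: "nat \<Rightarrow> (nat \<Rightarrow> complex) \<Rightarrow> nat \<Rightarrow> complex poly" where
  "Pp s z i = [:1 + cc s z i * z i, - cc s z i:] * Lp s z i ^ 2"
definition Qp :: "nat \<Rightarrow> (nat \<Rightarrow> complex) \<Rightarrow> nat \<Rightarrow> complex poly" where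
  "Qp s z i = [:- z i, 1:] * Lp s z i ^ 2"

lemma poly_lin: "poly [:- a / d, 1 / d:] (x::complex) = (x - a) / d"
  by (cases "d = 0") (simp_all add: field_simps)

lemma poly_Lp: "poly (Lp s z i) x = (\<Prod>k\<in>{..<s}-{i}. (x - z k) / (z i - z k))"
  by (simp add: Lp_def poly_prod diff_divide_distrib)

lemma degree_Lp: "i < s \<Longrightarrow> degree (Lp s z i) \<le> s - 1"
proof -
  assume "i < s"
  have "degree (Lp s z i) \<le> sum (degree \<circ> (\<lambda>k. [:- z k / (z i - z k), 1 / (z i - z k):])) ({..<s}-{i})"
    unfolding Lp_def by (rule degree_prod_sum_le) simp
  also have "\<dots> \<le> sum (\<lambda>_. 1) ({..<s}-{i})"
    by (intro sum_mono) simp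
  also have "\<dots> \<le> s - 1" using \<open>i < s\<close> by (auto simp: card_Diff_singleton)
  finally show ?thesis .
qed

lemma degree_Pp: "i < s \<Longrightarrow> s \<ge> 1 \<Longrightarrow> degree (Pp s z i) < 2 * s"
proof -
  assume i: "i < s" and s: "s \<ge> 1"
  have "degree (Pp s z i) \<le> degree [:1 + cc s z i * z i, - cc s z i:] + degree (Lp s z i ^ 2)"
    unfolding Pp_def by (rule degree_mult_le)
  also have "\<dots> \<le> 1 + 2 * (s - 1)"
    using degree_power_le[of "Lp s z i" 2] degree_Lp[OF i, of z] by simp
  finally show ?thesis using s by simp
qed

lemma degree_Qp: "i < s \<Longrightarrow> s \<ge> 1 \<Longrightarrow> degree (Qp s z i) < 2 * s"
proof -
  assume i: "i < s" and s: "s \<ge> 1"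
  have "degree (Qp s z i) \<le> degree [:- z i, 1:] + degree (Lp s z i ^ 2)"
    unfolding Qp_def by (rule degree_mult_le)
  also have "\<dots> \<le> 1 + 2 * (s - 1)"
    using degree_power_le[of "Lp s z i" 2] degree_Lp[OF i, of z] by simp
  finally show ?thesis using s by simp
qed

lemma pderiv_lin: "pderiv [:a, b:] = [:b:]"
  by (simp add: pderiv_pCons)

lemma Lprod_at:
  fixes z :: "nat \<Rightarrow> complex"
  assumes "finite B" "\<And>k. k \<in> B \<Longrightarrow> z k \<noteq> u"
  shows "poly (\<Prod>k\<in>B. [:- z k / (u - z k), 1 / (u - z k):]) u = 1 \<and>
         poly (pderiv (\<Prod>k\<in>B. [:- z k / (u - z k), 1 / (u - z k):])) u = (\<Sum>k\<in>B. 1 / (u - z k))"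
  using assms
proof (induction B rule: finite_induct)
  case empty
  then show ?case by simp
next
  case (insert a B)
  have ua: "u - z a \<noteq> 0" using insert.prems by auto
  have ih: "poly (\<Prod>k\<in>B. [:- z k / (u - z k), 1 / (u - z k):]) u = 1"
       "poly (pderiv (\<Prod>k\<in>B. [:- z k / (u - z k), 1 / (u - z k):])) u = (\<Sum>k\<in>B. 1 / (u - z k))"
    using insert by auto
  have l: "poly [:- z a / (u - z a), 1 / (u - z a):] u = 1"
    using ua by (simp add: diff_divide_distrib[symmetric])
  have pm: "poly (pderiv (F * R)) u = poly F u * poly (pderiv R) u + poly R u * poly (pderiv F) u"
    for F R :: "complex poly" by (simp add: pderiv_mult)
  show ?case using insert.hyps ih l unfolding prod.insert[OF insert.hyps] pm pderiv_lin
    by simp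
qed

lemma Lp_props:
  assumes inj: "inj_on z {..<s}" and i: "i < s"
  shows "poly (Lp s z i) (z i) = 1"
    and "poly (pderiv (Lp s z i)) (z i) = cc s z i / 2"
    and "\<And>j. j < s \<Longrightarrow> j \<noteq> i \<Longrightarrow> poly (Lp s z i) (z j) = 0"
proof -
  have ne: "\<And>k. k \<in> {..<s}-{i} \<Longrightarrow> z k \<noteq> z i" using inj i by (auto simp: inj_on_def)
  note L = Lprod_at[of "{..<s}-{i}" z "z i", OF _ ne]
  show "poly (Lp s z i) (z i) = 1" using L by (simp add: Lp_def)
  have "poly (pderiv (Lp s z i)) (z i) = (\<Sum>k\<in>{..<s}-{i}. 1 / (z i - z k))" using L by (simp add: Lp_def)
  also have "\<dots> = cc s z i / 2" unfolding cc_def sum_divide_distrib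
  proof (intro sum.cong refl)
    fix k show "1 / (z i - z k) = 2 / (z i - z k) / 2" by (cases "z i = z k") (simp_all add: field_simps)
  qed
  finally show "poly (pderiv (Lp s z i)) (z i) = cc s z i / 2" .
  fix j assume "j < s" "j \<noteq> i"
  thus "poly (Lp s z i) (z j) = 0" unfolding poly_Lp
    by (intro prod_zero) auto
qed

lemma pderiv_sq: "pderiv (L ^ 2) = smult 2 (L * pderiv L)"
  by (simp add: pderiv_power)

lemma pder_GL: "poly (pderiv (G * L ^ 2)) (x::complex) =
   poly G x * (2 * poly L x * poly (pderiv L) x) + poly L x ^ 2 * poly (pderiv G) x"
  by (simp add: pderiv_mult pderiv_sq)

lemma interp:
  assumes inj: "inj_on z {..<s}" and i: "i < s" and j: "j < s"
  shows "poly (Pp s z i) (z j) = (if i = j then 1 else 0)"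
    and "poly (pderiv (Pp s z i)) (z j) = 0"
    and "poly (Qp s z i) (z j) = 0"
    and "poly (pderiv (Qp s z i)) (z j) = (if i = j then 1 else 0)"
proof -
  note L = Lp_props[OF inj i]
  show "poly (Pp s z i) (z j) = (if i = j then 1 else 0)"
    using L j by (auto simp: Pp_def)
  show "poly (pderiv (Pp s z i)) (z j) = 0"
    using L j unfolding Pp_def pder_GL pderiv_lin by (cases "i = j") (auto simp: algebra_simps)
  show "poly (Qp s z i) (z j) = 0"
    using L j by (cases "i = j") (auto simp: Qp_def)
  show "poly (pderiv (Qp s z i)) (z j) = (if i = j then 1 else 0)"
    using L j unfolding Qp_def pder_GL pderiv_lin by (cases "i = j") auto
qed



lemma parallelogram_c: "(cmod (a + b))\<^sup>2 + (cmod (a - b))\<^sup>2 = 2 * ((cmod a)\<^sup>2 + (cmod b)\<^sup>2)"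
  unfolding cmod_power2 by (simp add: power2_eq_square algebra_simps)

lemma unit_diff_le2: "cmod x = 1 \<Longrightarrow> cmod u = 1 \<Longrightarrow> cmod (x - u) \<le> 2"
  using norm_triangle_ineq4[of x u] by simp

context
  fixes s :: nat and z :: "nat \<Rightarrow> complex" and i :: nat
  assumes inj: "inj_on z {..<s}" and unit: "\<And>j. j < s \<Longrightarrow> cmod (z j) = 1" and i: "i < s"
begin

lemma dprops:
  assumes "k \<in> {..<s} - {i}"
  shows "2 * delta z i k / pi \<le> cmod (z i - z k)" "0 < delta z i k" "delta z i k \<le> pi"
    "0 < cmod (z i - z k)"
proof -
  have k: "k < s" "k \<noteq> i" using assms by auto
  have ne: "z i \<noteq> z k" using inj k i by (auto simp: inj_on_def)
  note cb = chord_bound[OF unit[OF i] unit[OF k(1)] ne]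
  show "2 * delta z i k / pi \<le> cmod (z i - z k)" "0 < delta z i k" "delta z i k \<le> pi"
    using cb by (auto simp: delta_def)
  show "0 < cmod (z i - z k)" using ne by simp
qed

lemma L_bound:
  assumes x: "cmod x = 1"
  shows "cmod (poly (Lp s z i) x) \<le> (\<Prod>k\<in>{..<s}-{i}. pi / delta z i k)"
proof -
  have "cmod (poly (Lp s z i) x) = (\<Prod>k\<in>{..<s}-{i}. cmod (x - z k) / cmod (z i - z k))"
    by (simp add: poly_Lp prod_norm[symmetric] norm_divide)
  also have "\<dots> \<le> (\<Prod>k\<in>{..<s}-{i}. pi / delta z i k)"
  proof (rule prod_mono)
    fix k assume kA: "k \<in> {..<s}-{i}"
    note d = dprops[OF kA]
    have "cmod (x - z k) \<le> 2" using unit_diff_le2[OF x unit] kA by auto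
    hence "cmod (x - z k) / cmod (z i - z k) \<le> 2 / cmod (z i - z k)"
      using d by (intro divide_right_mono) auto
    also have "\<dots> \<le> 2 / (2 * delta z i k / pi)"
      using d by (intro divide_left_mono) auto
    also have "\<dots> = pi / delta z i k" by simp
    finally show "0 \<le> cmod (x - z k) / cmod (z i - z k) \<and>
                  cmod (x - z k) / cmod (z i - z k) \<le> pi / delta z i k" by simp
  qed
  finally show ?thesis .
qed

lemma cc_bound: "cmod (cc s z i) \<le> pi * (\<Sum>k\<in>{..<s}-{i}. 1 / delta z i k)"
proof -
  have "cmod (cc s z i) \<le> (\<Sum>k\<in>{..<s}-{i}. cmod (2 / (z i - z k)))"
    unfolding cc_def by (rule norm_sum)
  also have "\<dots> \<le> (\<Sum>k\<in>{..<s}-{i}. pi * (1 / delta z i k))"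
  proof (rule sum_mono)
    fix k assume kA: "k \<in> {..<s}-{i}"
    note d = dprops[OF kA]
    have "cmod (2 / (z i - z k)) = 2 / cmod (z i - z k)" by (simp add: norm_divide)
    also have "\<dots> \<le> 2 / (2 * delta z i k / pi)"
      using d by (intro divide_left_mono) auto
    also have "\<dots> = pi * (1 / delta z i k)" by simp
    finally show "cmod (2 / (z i - z k)) \<le> pi * (1 / delta z i k)" .
  qed
  finally show ?thesis by (simp add: sum_distrib_left)
qed

definition "KK = (\<Prod>k\<in>{..<s}-{i}. pi / delta z i k)\<^sup>2"

lemma KK_nonneg: "0 \<le> KK"
  unfolding KK_def by simp

lemma P_bound:
  assumes x: "cmod x = 1"
  shows "cmod (poly (Pp s z i) x) \<le> (1 + 2 * pi * (\<Sum>k\<in>{..<s}-{i}. 1 / delta z i k)) * KK"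
proof -
  let ?c = "cc s z i"
  have "poly (Pp s z i) x = (1 - ?c * (x - z i)) * (poly (Lp s z i) x)\<^sup>2"
    by (simp add: Pp_def algebra_simps)
  hence "cmod (poly (Pp s z i) x) = cmod (1 - ?c * (x - z i)) * (cmod (poly (Lp s z i) x))\<^sup>2"
    by (simp add: norm_mult norm_power)
  also have "\<dots> \<le> (1 + 2 * pi * (\<Sum>k\<in>{..<s}-{i}. 1 / delta z i k)) * KK"
  proof (rule mult_mono)
    have "cmod (1 - ?c * (x - z i)) \<le> 1 + cmod ?c * cmod (x - z i)"
      using norm_triangle_ineq4[of 1 "?c * (x - z i)"] by (simp add: norm_mult)
    also have "\<dots> \<le> 1 + cmod ?c * 2"
      using unit_diff_le2[OF x unit[OF i]] by (intro add_left_mono mult_left_mono) auto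
    also have "\<dots> \<le> 1 + 2 * pi * (\<Sum>k\<in>{..<s}-{i}. 1 / delta z i k)"
      using cc_bound by simp
    finally show "cmod (1 - ?c * (x - z i)) \<le> 1 + 2 * pi * (\<Sum>k\<in>{..<s}-{i}. 1 / delta z i k)" .
    show "(cmod (poly (Lp s z i) x))\<^sup>2 \<le> KK"
      unfolding KK_def using L_bound[OF x] by (intro power_mono) auto
    have "0 \<le> (\<Sum>k\<in>{..<s}-{i}. 1 / delta z i k)"
      using dprops by (intro sum_nonneg) (auto intro: less_imp_le)
    thus "0 \<le> 1 + 2 * pi * (\<Sum>k\<in>{..<s}-{i}. 1 / delta z i k)" by simp
  qed simp
  finally show ?thesis .
qed

lemma Q_bound:
  assumes x: "cmod x = 1"
  shows "cmod (poly (Qp s z i) x) \<le> 2 * KK"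
proof -
  have "poly (Qp s z i) x = (x - z i) * (poly (Lp s z i) x)\<^sup>2"
    by (simp add: Qp_def algebra_simps)
  hence "cmod (poly (Qp s z i) x) = cmod (x - z i) * (cmod (poly (Lp s z i) x))\<^sup>2"
    by (simp add: norm_mult norm_power)
  also have "\<dots> \<le> 2 * KK"
  proof (rule mult_mono)
    show "cmod (x - z i) \<le> 2" using unit_diff_le2[OF x unit[OF i]] .
    show "(cmod (poly (Lp s z i) x))\<^sup>2 \<le> KK"
      unfolding KK_def using L_bound[OF x] by (intro power_mono) auto
  qed simp_all
  finally show ?thesis .
qed

lemma Q_bound2:
  assumes x: "cmod x = 1" and s2: "s = 2" and k: "k < 2" "k \<noteq> i"
  shows "cmod (poly (Qp s z i) x) \<le> (1 + cmod (z i + z k) / 2) * KK"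
    and "(cmod (z i + z k))\<^sup>2 \<le> 4 - 4 / (pi / delta z i k)\<^sup>2"
    and "KK = (pi / delta z i k)\<^sup>2"
proof -
  have A: "{..<s}-{i} = {k}" using s2 k i by auto
  have kA: "k \<in> {..<s}-{i}" using A by simp
  note d = dprops[OF kA]
  show KK: "KK = (pi / delta z i k)\<^sup>2" unfolding KK_def A by simp
  define a where "a = cmod (x - z i)"
  define b where "b = cmod (x - z k)"
  define D where "D = cmod (z i - z k)"
  define e where "e = cmod (z i + z k)"
  have uk: "cmod (z k) = 1" using unit k s2 by auto
  have ui: "cmod (z i) = 1" using unit i by auto
  have eD: "e\<^sup>2 + D\<^sup>2 = 4"
    using parallelogram_c[of "z i" "z k"] ui uk by (simp add: e_def D_def)
  have "a\<^sup>2 + b\<^sup>2 = ((cmod (2 * x - (z i + z k)))\<^sup>2 + D\<^sup>2) / 2"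
    using parallelogram_c[of "x - z i" "x - z k"]
    by (simp add: a_def b_def D_def algebra_simps norm_minus_commute)
  also have "cmod (2 * x - (z i + z k)) \<le> 2 + e"
    using norm_triangle_ineq4[of "2 * x" "z i + z k"] x by (simp add: e_def norm_mult)
  hence "(cmod (2 * x - (z i + z k)))\<^sup>2 \<le> (2 + e)\<^sup>2" by (intro power_mono) auto
  hence "((cmod (2 * x - (z i + z k)))\<^sup>2 + D\<^sup>2) / 2 \<le> ((2 + e)\<^sup>2 + D\<^sup>2) / 2" by simp
  also have "\<dots> = 4 + 2 * e" using eD by (simp add: power2_eq_square algebra_simps)
  finally have ab: "a\<^sup>2 + b\<^sup>2 \<le> 4 + 2 * e" .
  have a0: "0 \<le> a" and b0: "0 \<le> b" and b2: "b \<le> 2"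
    using unit_diff_le2[OF x uk] by (auto simp: a_def b_def)
  have "a * b \<le> (a\<^sup>2 + b\<^sup>2) / 2" using sum_squares_bound[of a b] by simp
  hence "a * b * b \<le> (a\<^sup>2 + b\<^sup>2) / 2 * 2"
    using a0 b0 b2 by (intro mult_mono) auto
  hence ab2: "a * b\<^sup>2 \<le> 4 + 2 * e" using ab by (simp add: power2_eq_square mult_ac)
  have Dpos: "0 < D" using d by (simp add: D_def)
  have Dge: "2 * delta z i k / pi \<le> D" using d by (simp add: D_def)
  have "poly (Qp s z i) x = (x - z i) * ((x - z k) / (z i - z k))\<^sup>2"
    by (simp add: Qp_def poly_Lp A algebra_simps)
  hence "cmod (poly (Qp s z i) x) = a * (b / D)\<^sup>2"
    by (simp add: norm_mult norm_power norm_divide a_def b_def D_def)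
  also have "\<dots> = a * b\<^sup>2 / D\<^sup>2" by (simp add: power_divide)
  also have "\<dots> \<le> (4 + 2 * e) / D\<^sup>2" using ab2 Dpos by (intro divide_right_mono) auto
  also have "\<dots> \<le> (4 + 2 * e) / (2 * delta z i k / pi)\<^sup>2"
  proof -
    have dp: "0 < 2 * delta z i k / pi" using d by simp
    show ?thesis using Dge dp by (intro divide_left_mono power_mono mult_pos_pos) (auto simp: e_def)
  qed
  also have "\<dots> = (1 + e / 2) * KK" unfolding KK using d by (simp add: power2_eq_square field_simps)
  finally show "cmod (poly (Qp s z i) x) \<le> (1 + cmod (z i + z k) / 2) * KK" by (simp add: e_def)
  have "(2 / (pi / delta z i k))\<^sup>2 \<le> D\<^sup>2" using Dge d by (intro power_mono) (auto simp: field_simps)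
  thus "(cmod (z i + z k))\<^sup>2 \<le> 4 - 4 / (pi / delta z i k)\<^sup>2"
    using eD by (simp add: e_def power_divide)
qed

end



lemma numeric:
  fixes t g q e :: real
  assumes g: "0 < g" "g \<le> 2 / (5 * t)" and t: "1 \<le> t" and q: "0 \<le> q" "q \<le> 2"
    and alt: "t \<ge> 2 \<or> (q \<le> 1 + e / 2 \<and> 0 \<le> e \<and> e\<^sup>2 \<le> 4 - 4 / t\<^sup>2)"
  shows "((1 + 2 * t)\<^sup>2 + q\<^sup>2) * g\<^sup>2 \<le> 2"
proof -
  have claim: "(1 + 2 * t)\<^sup>2 + q\<^sup>2 \<le> 12.5 * t\<^sup>2"
  proof (cases "t \<ge> 1.05")
    case True
    have "q\<^sup>2 \<le> 2\<^sup>2" using q by (intro power_mono) auto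
    hence q4: "q\<^sup>2 \<le> 4" by simp
    have t21: "21 \<le> 20 * t" using True by simp
    have h1: "21 * t \<le> 20 * (t*t)"
      using mult_right_mono[OF t21, of t] t by (simp add: mult_ac)
    have e1: "(1+2*t)\<^sup>2 = 1 + 4*t + 4*(t*t)" by (simp add: power2_eq_square algebra_simps)
    have e2: "t\<^sup>2 = t*t" by (simp add: power2_eq_square)
    show ?thesis unfolding e1 e2 using q4 h1 t21 by linarith
  next
    case False
    hence t2: "t < 1.05" by simp
    hence alt': "q \<le> 1 + e / 2 \<and> 0 \<le> e \<and> e\<^sup>2 \<le> 4 - 4 / t\<^sup>2" using alt by auto
    have "t\<^sup>2 \<le> 1.05\<^sup>2" using t2 t by (intro power_mono) auto
    hence "t\<^sup>2 \<le> 1.1025" by (simp add: power_divide)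
    hence "4 / 1.1025 \<le> 4 / t\<^sup>2" using t by (intro divide_left_mono) auto
    hence e2: "e\<^sup>2 \<le> 0.373" using alt' by simp
    have e: "e \<le> 0.62"
    proof (rule ccontr)
      assume "\<not> e \<le> 0.62"
      hence "0.62\<^sup>2 < e\<^sup>2" by (intro power_strict_mono) auto
      thus False using e2 by (simp add: power_divide)
    qed
    have "q \<le> 1.31" using alt' e by simp
    hence "q\<^sup>2 \<le> 1.31\<^sup>2" using q by (intro power_mono) auto
    moreover have "(1 + 2 * t)\<^sup>2 \<le> 3.1\<^sup>2" using t2 t by (intro power_mono) auto
    moreover have "1 \<le> t\<^sup>2" using t by (simp add: one_le_power)
    ultimately show ?thesis by (simp add: power_divide)
  qed
  have "g\<^sup>2 \<le> (2 / (5 * t))\<^sup>2" using g by (intro power_mono) auto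
  hence "((1 + 2 * t)\<^sup>2 + q\<^sup>2) * g\<^sup>2 \<le> 12.5 * t\<^sup>2 * (2 / (5 * t))\<^sup>2"
    using claim by (intro mult_mono) auto
  also have "\<dots> = 2" using t by (simp add: power2_eq_square field_simps)
  finally show ?thesis .
qed



definition HH :: "nat \<Rightarrow> (nat \<Rightarrow> complex) \<Rightarrow> nat \<Rightarrow> complex poly" where
  "HH s z r = (if r < s then Pp s z r else Qp s z (r - s))"

lemma degree_HH: "s \<ge> 1 \<Longrightarrow> r < 2 * s \<Longrightarrow> degree (HH s z r) < 2 * s"
  unfolding HH_def using degree_Pp[of r s z] degree_Qp[of "r - s" s z] by auto

lemma VU:
  assumes inj: "inj_on z {..<s}" and s1: "s \<ge> 1" and r: "r < 2 * s" and j: "j < 2 * s"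
  shows "(\<Sum>k\<in>{..<2 * s}. coeff (HH s z r) k * conf_vandermonde s z k j) = (if r = j then 1 else 0)"
proof (cases "j < s")
  case True
  have "(\<Sum>k\<in>{..<2 * s}. coeff (HH s z r) k * conf_vandermonde s z k j) = (\<Sum>k\<in>{..<2 * s}. coeff (HH s z r) k * z j ^ k)"
    using True by (simp add: conf_vandermonde_def)
  also have "\<dots> = poly (HH s z r) (z j)" using poly_as_sum[OF degree_HH[OF s1 r]] by simp
  also have "\<dots> = (if r = j then 1 else 0)"
  proof (cases "r < s")
    case True
    thus ?thesis using interp(1)[OF inj True \<open>j < s\<close>] by (simp add: HH_def)
  next
    case False
    thus ?thesis using interp(3)[OF inj _ \<open>j < s\<close>, of "r - s"] r \<open>j < s\<close> by (simp add: HH_def)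
  qed
  finally show ?thesis .
next
  case False
  have "(\<Sum>k\<in>{..<2 * s}. coeff (HH s z r) k * conf_vandermonde s z k j)
      = (\<Sum>k\<in>{..<2 * s}. coeff (HH s z r) k * (of_nat k * z (j - s) ^ (k - 1)))"
    using False by (simp add: conf_vandermonde_def)
  also have "\<dots> = poly (pderiv (HH s z r)) (z (j - s))" using pderiv_as_sum[OF degree_HH[OF s1 r]] by simp
  also have "\<dots> = (if r = j then 1 else 0)"
  proof (cases "r < s")
    case True
    thus ?thesis using interp(2)[OF inj True, of "j - s"] j False by (simp add: HH_def)
  next
    case F: False
    thus ?thesis using interp(4)[OF inj _ _, of "r - s" "j - s"] r j False by (auto simp: HH_def)
  qed
  finally show ?thesis .
qed

lemma recover:
  assumes inj: "inj_on z {..<s}" and s1: "s \<ge> 1" and r: "r < 2 * s"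
  shows "x r = (\<Sum>k\<in>{..<2 * s}. coeff (HH s z r) k * mat_vec (2 * s) (conf_vandermonde s z) x k)"
proof -
  have "(\<Sum>k\<in>{..<2 * s}. coeff (HH s z r) k * mat_vec (2 * s) (conf_vandermonde s z) x k)
      = (\<Sum>k\<in>{..<2 * s}. \<Sum>j\<in>{..<2 * s}. coeff (HH s z r) k * conf_vandermonde s z k j * x j)"
    by (simp add: mat_vec_def sum_distrib_left mult_ac)
  also have "\<dots> = (\<Sum>j\<in>{..<2 * s}. \<Sum>k\<in>{..<2 * s}. coeff (HH s z r) k * conf_vandermonde s z k j * x j)"
    by (rule sum.swap)
  also have "\<dots> = (\<Sum>j\<in>{..<2 * s}. (\<Sum>k\<in>{..<2 * s}. coeff (HH s z r) k * conf_vandermonde s z k j) * x j)"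
    by (simp add: sum_distrib_right)
  also have "\<dots> = (\<Sum>j\<in>{..<2 * s}. (if r = j then 1 else 0) * x j)"
    using VU[OF inj s1 r] by simp
  also have "\<dots> = (\<Sum>j\<in>{..<2 * s}. (if r = j then x j else 0))"
    by (intro sum.cong) auto
  also have "\<dots> = x r" using r by (simp add: sum.delta)
  finally show ?thesis by simp
qed



lemma row_bound:
  assumes s1: "s \<ge> 1" and inj: "inj_on z {..<s}" and unit: "\<And>j. j < s \<Longrightarrow> cmod (z j) = 1"
    and i: "i < s"
  shows "(\<Sum>k\<in>{..<2 * s}. (cmod (coeff (Pp s z i) k))\<^sup>2) + (\<Sum>k\<in>{..<2 * s}. (cmod (coeff (Qp s z i) k))\<^sup>2)
         \<le> 2 * (pi ^ (2 * (s - 1)) / (gamma s z i * (\<Prod>k\<in>{..<s}-{i}. (delta z i k)\<^sup>2)))\<^sup>2"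
proof -
  define A where "A = {..<s}-{i}"
  define S where "S = (\<Sum>k\<in>A. 1 / delta z i k)"
  define t where "t = pi * S"
  define K where "K = KK s z i"
  define Pd where "Pd = (\<Prod>k\<in>A. delta z i k)"
  define g where "g = gamma s z i"
  note dp = dprops[OF inj unit i]
  have N1: "2 * s \<ge> 1" using s1 by simp
  have cardA: "card A = s - 1" using i by (simp add: A_def card_Diff_singleton)
  have Pd_pos: "0 < Pd" using dp by (auto simp: Pd_def A_def intro: prod_pos)
  have KKe: "KK s z i = (\<Prod>k\<in>A. pi / delta z i k)\<^sup>2" using KK_def[OF inj unit i] by (simp add: A_def)
  have K_eq: "K = (pi ^ (s - 1) / Pd)\<^sup>2"
    unfolding K_def KKe Pd_def prod_dividef using cardA by simp
  have prod_sq: "(\<Prod>k\<in>A. (delta z i k)\<^sup>2) = Pd\<^sup>2" by (simp add: Pd_def prod_power_distrib)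
  have S0: "0 \<le> S" unfolding S_def A_def using dp by (intro sum_nonneg) (auto intro: less_imp_le)
  have t0: "0 \<le> t" using S0 by (simp add: t_def)
  have K0: "0 \<le> K" by (simp add: K_def KK_nonneg[OF inj unit i])
  have Pc: "(\<Sum>k\<in>{..<2 * s}. (cmod (coeff (Pp s z i) k))\<^sup>2) \<le> ((1 + 2 * t) * K)\<^sup>2"
  proof (rule coeff_norm_bound[OF N1])
    fix x :: complex assume x: "cmod x = 1"
    have "cmod (\<Sum>k<2 * s. coeff (Pp s z i) k * x ^ k) = cmod (poly (Pp s z i) x)"
      using poly_as_sum[OF degree_Pp[OF i s1]] by simp
    also have "\<dots> \<le> (1 + 2 * t) * K"
      using P_bound[OF inj unit i x] by (simp add: t_def S_def A_def K_def mult_ac)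
    finally show "cmod (\<Sum>k<2 * s. coeff (Pp s z i) k * x ^ k) \<le> (1 + 2 * t) * K" .
  qed
  have Qc: "(\<Sum>k\<in>{..<2 * s}. (cmod (coeff (Qp s z i) k))\<^sup>2) \<le> (q * K)\<^sup>2"
    if qb: "\<And>x. cmod x = 1 \<Longrightarrow> cmod (poly (Qp s z i) x) \<le> q * K" for q
  proof (rule coeff_norm_bound[OF N1])
    fix x :: complex assume x: "cmod x = 1"
    have "cmod (\<Sum>k<2 * s. coeff (Qp s z i) k * x ^ k) = cmod (poly (Qp s z i) x)"
      using poly_as_sum[OF degree_Qp[OF i s1]] by simp
    also have "\<dots> \<le> q * K" using qb[OF x] .
    finally show "cmod (\<Sum>k<2 * s. coeff (Qp s z i) k * x ^ k) \<le> q * K" .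
  qed
  have rhs: "2 * (pi ^ (2 * (s - 1)) / (g * (\<Prod>k\<in>A. (delta z i k)\<^sup>2)))\<^sup>2 = 2 * K\<^sup>2 / g\<^sup>2"
    unfolding prod_sq K_eq by (simp add: power_divide power_mult_distrib power_mult[symmetric] mult.commute)
  have main: "((1 + 2 * t)\<^sup>2 + q\<^sup>2) * g\<^sup>2 \<le> 2 \<Longrightarrow> 0 < g \<Longrightarrow>
     ((1 + 2 * t) * K)\<^sup>2 + (q * K)\<^sup>2 \<le> 2 * K\<^sup>2 / g\<^sup>2" for q
  proof -
    assume h: "((1 + 2 * t)\<^sup>2 + q\<^sup>2) * g\<^sup>2 \<le> 2" and g0: "0 < g"
    have "((1 + 2 * t) * K)\<^sup>2 + (q * K)\<^sup>2 = (((1 + 2 * t)\<^sup>2 + q\<^sup>2) * g\<^sup>2) * K\<^sup>2 / g\<^sup>2"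
      using g0 by (simp add: power_mult_distrib power2_eq_square field_simps)
    also have "\<dots> \<le> 2 * K\<^sup>2 / g\<^sup>2"
      using h g0 by (intro divide_right_mono mult_right_mono) auto
    finally show ?thesis .
  qed
  show ?thesis
  proof (cases "s = 1")
    case True
    hence A0: "A = {}" using i by (auto simp: A_def)
    hence S00: "S = 0" by (simp add: S_def)
    have g2: "g = 1/2" using S00 unfolding g_def gamma_def S_def A_def by (simp add: Let_def)
    have K1: "K = 1" using A0 unfolding K_def KKe by simp
    have "(\<Sum>k\<in>{..<2 * s}. (cmod (coeff (Qp s z i) k))\<^sup>2) \<le> (2 * K)\<^sup>2"
      by (rule Qc) (use Q_bound[OF inj unit i] in \<open>auto simp: K_def\<close>)
    moreover have "((1 + 2 * t)\<^sup>2 + 2\<^sup>2) * g\<^sup>2 \<le> 2" unfolding g2 using S00 by (simp add: t_def power2_eq_square)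
    ultimately show ?thesis
      using Pc main[of 2] g2 rhs by (simp add: A_def g_def)
  next
    case False
    hence s2: "s \<ge> 2" using s1 by simp
    have Ane: "A \<noteq> {}" using cardA s2 by auto
    have Spos: "0 < S" unfolding S_def using dp Ane by (intro sum_pos) (auto simp: A_def)
    have geq: "g = min (1/2) (2 / (5 * pi) * (1 / S))"
      using Spos unfolding g_def gamma_def S_def A_def by (simp add: Let_def)
    have gpos: "0 < g" using Spos by (simp add: geq)
    have gle: "g \<le> 2 / (5 * t)" using Spos by (simp add: geq t_def field_simps)
    have tcard: "real (card A) \<le> t"
    proof -
      have "real (card A) = (\<Sum>k\<in>A. 1)" by simp
      also have "\<dots> \<le> (\<Sum>k\<in>A. pi / delta z i k)"
        using dp by (intro sum_mono) (auto simp: A_def field_simps)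
      also have "\<dots> = t" by (simp add: t_def S_def sum_distrib_left)
      finally show ?thesis .
    qed
    have t1: "1 \<le> t" using tcard cardA s2 by simp
    obtain q where q0: "0 \<le> q" and q2: "q \<le> 2"
      and alt: "t \<ge> 2 \<or> (\<exists>e. q \<le> 1 + e / 2 \<and> 0 \<le> e \<and> e\<^sup>2 \<le> 4 - 4 / t\<^sup>2)"
      and qb: "\<And>x. cmod x = 1 \<Longrightarrow> cmod (poly (Qp s z i) x) \<le> q * K"
    proof (cases "s = 2")
      case True
      define k where "k = 1 - i"
      have k: "k < 2" "k \<noteq> i" using i True unfolding k_def by (cases i; simp)+
      have Ak: "A = {k}" using k i True by (auto simp: A_def)
      have tk: "t = pi / delta z i k" by (simp add: t_def S_def Ak)
      define e where "e = cmod (z i + z k)"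
      note Q2 = Q_bound2[OF inj unit i _ True k]
      have e2: "e\<^sup>2 \<le> 4 - 4 / t\<^sup>2" using Q2(2)[of 1] by (simp add: e_def tk)
      have e0: "0 \<le> e" by (simp add: e_def)
      have "0 \<le> 4 / t\<^sup>2" by simp
      hence "e\<^sup>2 \<le> 4" using e2 by linarith
      hence "e\<^sup>2 \<le> 2\<^sup>2" by simp
      hence e22: "e \<le> 2" by (rule power2_le_imp_le) simp
      show ?thesis
      proof (rule that[of "1 + e / 2"])
        show "0 \<le> 1 + e / 2" using e0 by simp
        show "1 + e / 2 \<le> 2" using e22 by simp
        show "t \<ge> 2 \<or> (\<exists>e'. 1 + e / 2 \<le> 1 + e' / 2 \<and> 0 \<le> e' \<and> e'\<^sup>2 \<le> 4 - 4 / t\<^sup>2)"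
          using e0 e2 by blast
        fix x :: complex assume "cmod x = 1"
        thus "cmod (poly (Qp s z i) x) \<le> (1 + e / 2) * K"
          using Q2(1) by (simp add: e_def K_def)
      qed
    next
      case False
      hence "card A \<ge> 2" using cardA s2 by simp
      hence "t \<ge> 2" using tcard by simp
      thus ?thesis using that[of 2] Q_bound[OF inj unit i] by (simp add: K_def)
    qed
    obtain e where alt': "t \<ge> 2 \<or> (q \<le> 1 + e / 2 \<and> 0 \<le> e \<and> e\<^sup>2 \<le> 4 - 4 / t\<^sup>2)"
      using alt by blast
    have num: "((1 + 2 * t)\<^sup>2 + q\<^sup>2) * g\<^sup>2 \<le> 2"
      by (rule numeric[OF gpos gle t1 q0 q2 alt'])
    have "(\<Sum>k\<in>{..<2 * s}. (cmod (coeff (Qp s z i) k))\<^sup>2) \<le> (q * K)\<^sup>2"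
      by (rule Qc) (rule qb)
    thus ?thesis using Pc main[OF num gpos] rhs by (simp add: A_def g_def)
  qed
qed



lemma sum_split_add: "(\<Sum>r\<in>{..<s+m}. f r) = (\<Sum>r<s. f r) + (\<Sum>i<m. f (s+i :: nat))"
  by (induction m) (simp_all add: add_ac)

lemma sum_split2: "(\<Sum>r\<in>{..<2 * s}. f r) = (\<Sum>i<s. f i + f (s+i :: nat))"
  using sum_split_add[where s=s and m=s and f=f] by (simp add: mult_2 sum.distrib)

lemma gamma_pos: "0 < gamma s z j"
proof -
  have "0 \<le> (\<Sum>k\<in>{..<s}-{j}. 1 / delta z j k)"
    by (intro sum_nonneg) (simp add: delta_def)
  thus ?thesis unfolding gamma_def Let_def by auto
qed

theorem proposition4p3:
  fixes s :: nat and z :: "nat \<Rightarrow> complex"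
  assumes "s \<ge> 1"
    and "inj_on z {..<s}"
    and "\<And>j. j < s \<Longrightarrow> cmod (z j) = 1"
  shows "sigma_min (2 * s) (conf_vandermonde s z)
           \<ge> pi powr (2 * (1 - real s)) / sqrt (2 * real s) *
             Min ((\<lambda>j. gamma s z j * (\<Prod>k\<in>{..<s} - {j}. (delta z j k)\<^sup>2)) ` {..<s})"
proof -
  note s1 = assms(1) and inj = assms(2) and unit = assms(3)
  define n where "n = 2 * s"
  define U where "U = conf_vandermonde s z"
  define mu where "mu j = gamma s z j * (\<Prod>k\<in>{..<s} - {j}. (delta z j k)\<^sup>2)" for j
  define m where "m = Min (mu ` {..<s})"
  have mu_pos: "0 < mu j" if j: "j < s" for j
  proof -
    have "0 < (\<Prod>k\<in>{..<s} - {j}. (delta z j k)\<^sup>2)"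
    proof (rule prod_pos)
      fix k assume k: "k \<in> {..<s} - {j}"
      have "0 < delta z j k" by (rule dprops(2)[OF inj unit j k])
      thus "0 < (delta z j k)\<^sup>2" by simp
    qed
    thus ?thesis using gamma_pos[of s z j] by (simp add: mu_def)
  qed
  have "0 \<in> {..<s}" using s1 by simp
  hence ne: "mu ` {..<s} \<noteq> {}" by blast
  have m_in: "m \<in> mu ` {..<s}" unfolding m_def by (rule Min_in) (use ne in auto)
  have m_pos: "0 < m" using m_in mu_pos by auto
  have m_le: "m \<le> mu j" if "j < s" for j unfolding m_def using that by (intro Min_le) auto
  define C where "C = pi ^ (2 * (s - 1)) / m"
  have C_pos: "0 < C" using m_pos by (simp add: C_def)
  have powr_eq: "pi powr (2 * (1 - real s)) = 1 / pi ^ (2 * (s - 1))"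
  proof -
    have e: "2 * (1 - real s) = - real (2 * (s - 1))" using s1 by (simp add: of_nat_diff)
    have "pi powr (2 * (1 - real s)) = inverse (pi powr real (2 * (s - 1)))"
      unfolding e by (rule powr_minus)
    also have "\<dots> = 1 / pi ^ (2 * (s - 1))"
      using powr_realpow[OF pi_gt_zero, of "2 * (s - 1)"] by (simp add: divide_inverse del: of_nat_mult)
    finally show ?thesis .
  qed
  have lhs_eq: "pi powr (2 * (1 - real s)) / sqrt (2 * real s) *
             Min ((\<lambda>j. gamma s z j * (\<Prod>k\<in>{..<s} - {j}. (delta z j k)\<^sup>2)) ` {..<s})
             = 1 / (sqrt (2 * real s) * C)"
  proof -
    have "Min ((\<lambda>j. gamma s z j * (\<Prod>k\<in>{..<s} - {j}. (delta z j k)\<^sup>2)) ` {..<s}) = m"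
      by (simp add: m_def mu_def[abs_def])
    thus ?thesis unfolding powr_eq C_def using m_pos by simp
  qed
  define Rr where "Rr r = (\<Sum>k\<in>{..<n}. (cmod (coeff (HH s z r) k))\<^sup>2)" for r
  have sumR: "(\<Sum>r\<in>{..<n}. Rr r) \<le> 2 * real s * C\<^sup>2"
  proof -
    have "(\<Sum>r\<in>{..<n}. Rr r) = (\<Sum>i<s. Rr i + Rr (s + i))" unfolding n_def by (rule sum_split2)
    also have "\<dots> \<le> (\<Sum>i<s. 2 * C\<^sup>2)"
    proof (rule sum_mono)
      fix i assume "i \<in> {..<s}"
      hence i: "i < s" by simp
      have "Rr i + Rr (s + i) \<le> 2 * (pi ^ (2 * (s - 1)) / mu i)\<^sup>2"
        using row_bound[OF s1 inj unit i] i by (simp add: Rr_def HH_def n_def mu_def)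
      also have "\<dots> \<le> 2 * C\<^sup>2"
      proof -
        have "pi ^ (2 * (s - 1)) / mu i \<le> C"
          unfolding C_def using m_le[OF i] m_pos mu_pos[OF i] by (intro divide_left_mono) auto
        hence "(pi ^ (2 * (s - 1)) / mu i)\<^sup>2 \<le> C\<^sup>2" using mu_pos[OF i]
          by (intro power_mono) auto
        thus ?thesis by simp
      qed
      finally show "Rr i + Rr (s + i) \<le> 2 * C\<^sup>2" .
    qed
    also have "\<dots> = 2 * real s * C\<^sup>2" by simp
    finally show ?thesis .
  qed
  have bound: "1 / (sqrt (2 * real s) * C) \<le> vnorm n (mat_vec n U x)" if x: "vnorm n x = 1" for x
  proof -
    define y where "y = mat_vec n U x"
    define Y where "Y = (\<Sum>k\<in>{..<n}. (cmod (y k))\<^sup>2)"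
    have X: "(\<Sum>r\<in>{..<n}. (cmod (x r))\<^sup>2) = 1"
    proof -
      have "sqrt (\<Sum>r\<in>{..<n}. (cmod (x r))\<^sup>2) = 1" using x by (simp add: vnorm_def)
      thus ?thesis by simp
    qed
    have xr: "(cmod (x r))\<^sup>2 \<le> Rr r * Y" if r: "r < n" for r
    proof -
      have "x r = (\<Sum>k\<in>{..<n}. coeff (HH s z r) k * y k)"
        using recover[OF inj s1, of r x] r by (simp add: n_def y_def U_def)
      hence "cmod (x r) \<le> (\<Sum>k\<in>{..<n}. cmod (coeff (HH s z r) k) * cmod (y k))"
        using norm_sum[of "\<lambda>k. coeff (HH s z r) k * y k" "{..<n}"] by (simp add: norm_mult)
      hence "(cmod (x r))\<^sup>2 \<le> (\<Sum>k\<in>{..<n}. cmod (coeff (HH s z r) k) * cmod (y k))\<^sup>2"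
        by (intro power_mono) auto
      also have "\<dots> \<le> Rr r * Y" unfolding Rr_def Y_def by (rule Cauchy_Schwarz_ineq_sum)
      finally show ?thesis .
    qed
    have "1 \<le> (\<Sum>r\<in>{..<n}. Rr r * Y)" unfolding X[symmetric] using xr by (intro sum_mono) auto
    also have "\<dots> = (\<Sum>r\<in>{..<n}. Rr r) * Y" by (simp add: sum_distrib_right)
    also have "\<dots> \<le> 2 * real s * C\<^sup>2 * Y"
      using sumR by (intro mult_right_mono) (auto simp: Y_def intro: sum_nonneg)
    finally have "1 \<le> 2 * real s * C\<^sup>2 * Y" .
    hence Yb: "1 / (2 * real s * C\<^sup>2) \<le> Y" using C_pos s1 by (simp add: field_simps)
    have "1 / (sqrt (2 * real s) * C) = sqrt (1 / (2 * real s * C\<^sup>2))"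
      using C_pos by (simp add: real_sqrt_divide real_sqrt_mult)
    also have "\<dots> \<le> sqrt Y" using Yb by (rule real_sqrt_le_mono)
    also have "\<dots> = vnorm n (mat_vec n U x)" by (simp add: vnorm_def Y_def y_def)
    finally show ?thesis .
  qed
  have "1 / (sqrt (2 * real s) * C) \<le> sigma_min n U"
    unfolding sigma_min_def
  proof (rule cInf_greatest)
    define x0 where "x0 = (\<lambda>k::nat. if k = 0 then (1::complex) else 0)"
    have "vnorm n x0 = 1"
    proof -
      have "(\<Sum>k\<in>{..<n}. (cmod (x0 k))\<^sup>2) = (\<Sum>k\<in>{..<n}. if k = 0 then 1 else 0)"
        by (intro sum.cong) (auto simp: x0_def)
      also have "\<dots> = 1" using s1 by (simp add: n_def)
      finally show ?thesis by (simp add: vnorm_def)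
    qed
    thus "{vnorm n (mat_vec n U x) |x. vnorm n x = 1} \<noteq> {}" by blast
  next
    fix v assume "v \<in> {vnorm n (mat_vec n U x) |x. vnorm n x = 1}"
    thus "1 / (sqrt (2 * real s) * C) \<le> v" using bound by blast
  qed
  thus ?thesis using lhs_eq by (simp add: n_def U_def)
qed


end
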